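(* Let $G$ be a connected cograph. Then every minimum edge separator $F$ of $G$ satisfies $|F|=\delta(G)$, where $\delta(G)$ is the minimum degree of $G$.
   Context: A cograph is a graph that can be built from single vertices by repeatedly taking disjoint unions and joins; equivalently a graph with no induced path on four vertices. For a connected graph $G$, an edge separator is a set $F\subseteq E(G)$ such that $G-F=(V(G),E(G)\setminus F)$ is disconnected; a minimum edge separator is an edge separator of least size. *)

theory Defs
  imports Main
begin

definition simple_graph :: "'a set \<Rightarrow> 'a set set \<Rightarrow> bool" where
  "simple_graph V E \<longleftrightarrow> finite V \<and>
     (\<forall>e\<in>E. \<exists>u v. e = {u, v} \<and> u \<noteq> v \<and> u \<in> V \<and> v \<in> V)"

definition adj :: "'a set set \<Rightarrow> 'a \<Rightarrow> 'a \<Rightarrow> bool" where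
  "adj E u v \<longleftrightarrow> u \<noteq> v \<and> {u, v} \<in> E"

definition graph_connected :: "'a set \<Rightarrow> 'a set set \<Rightarrow> bool" where
  "graph_connected V E \<longleftrightarrow> V \<noteq> {} \<and>
     (\<forall>u\<in>V. \<forall>v\<in>V. (u, v) \<in> {(x, y). adj E x y}\<^sup>*)"

definition cograph :: "'a set \<Rightarrow> 'a set set \<Rightarrow> bool" where
  "cograph V E \<longleftrightarrow> \<not> (\<exists>a\<in>V. \<exists>b\<in>V. \<exists>c\<in>V. \<exists>d\<in>V.
     distinct [a, b, c, d] \<and> adj E a b \<and> adj E b c \<and> adj E c d \<and>
     \<not> adj E a c \<and> \<not> adj E b d \<and> \<not> adj E a d)"

definition degree :: "'a set \<Rightarrow> 'a set set \<Rightarrow> 'a \<Rightarrow> nat" where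
  "degree V E v = card {u \<in> V. adj E v u}"

definition min_degree :: "'a set \<Rightarrow> 'a set set \<Rightarrow> nat" where
  "min_degree V E = Min (degree V E ` V)"

definition edge_separator :: "'a set \<Rightarrow> 'a set set \<Rightarrow> 'a set set \<Rightarrow> bool" where
  "edge_separator V E F \<longleftrightarrow> F \<subseteq> E \<and> \<not> graph_connected V (E - F)"

definition min_edge_separator :: "'a set \<Rightarrow> 'a set set \<Rightarrow> 'a set set \<Rightarrow> bool" where
  "min_edge_separator V E F \<longleftrightarrow> edge_separator V E F \<and>
     (\<forall>F'. edge_separator V E F' \<longrightarrow> card F \<le> card F')"

end

theory Submission
  imports Defs
begin

lemma adj_sym: "adj E u v = adj E v u"
  unfolding adj_def by (auto simp: insert_commute)

lemma adj_V: "simple_graph V E \<Longrightarrow> adj E u v \<Longrightarrow> u \<in> V \<and> v \<in> V"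
  unfolding simple_graph_def adj_def by (metis doubleton_eq_iff)

lemma common_nb_aux:
  assumes sg: "simple_graph V E" and cg: "cograph V E" and xV: "x \<in> V"
    and r: "(x, z) \<in> {(a, b). adj E a b}\<^sup>*"
  shows "z = x \<or> adj E x z \<or> (\<exists>c. adj E x c \<and> adj E c z)"
  using r
proof (induction rule: rtrancl_induct)
  case base then show ?case by simp
next
  case (step z w)
  have zw: "adj E z w" using step.hyps(2) by simp
  from step.IH show ?case
  proof (elim disjE)
    assume "z = x" then show ?thesis using zw by simp
  next
    assume "adj E x z" then show ?thesis using zw by blast
  next
    assume "\<exists>c. adj E x c \<and> adj E c z"
    then obtain c where xc: "adj E x c" and cz: "adj E c z" by blast
    show ?thesis
    proof (rule ccontr)
      assume H: "\<not> ?thesis"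
      hence h1: "w \<noteq> x" "\<not> adj E x w" "\<not> adj E c w" using xc by auto
      have h2: "\<not> adj E x z" using H zw h1 by auto
      have inV: "c \<in> V" "z \<in> V" "w \<in> V" using adj_V[OF sg] xc cz zw by auto
      have d: "distinct [x, c, z, w]"
        using xc cz zw h1 h2 unfolding adj_def by auto
      have "\<not> adj E x z"
      proof
        assume "adj E x z"
        then show False using H zw by blast
      qed
      then show False using cg xV inV d xc cz zw h1 unfolding cograph_def by blast
    qed
  qed
qed

lemma common_nb:
  assumes sg: "simple_graph V E" and cg: "cograph V E" and con: "graph_connected V E"
    and "x \<in> V" "y \<in> V" "x \<noteq> y" "\<not> adj E x y"
  shows "\<exists>c. adj E x c \<and> adj E c y"
proof -
  have "(x, y) \<in> {(a, b). adj E a b}\<^sup>*" using con assms(4,5) unfolding graph_connected_def by blast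
  from common_nb_aux[OF sg cg assms(4) this] show ?thesis using assms(6,7) by blast
qed

lemma arith_bound:
  fixes k d :: nat and f :: "'b \<Rightarrow> nat"
  assumes "finite A" "card A = k" "k \<ge> 1"
    and "\<And>x. x \<in> A \<Longrightarrow> f x \<ge> 1 \<and> f x + k \<ge> d + 1"
  shows "sum f A \<ge> d"
proof (cases "k \<ge> d")
  case True
  have "sum (\<lambda>_. 1::nat) A \<le> sum f A" by (rule sum_mono) (use assms in auto)
  then show ?thesis using assms True by simp
next
  case False
  have "sum (\<lambda>_. d + 1 - k) A \<le> sum f A" by (rule sum_mono) (use assms in force)
  hence "k * (d + 1 - k) \<le> sum f A" using assms by simp
  moreover have j: "d = k + (d - k)" "d - k \<ge> 1" using False by auto
  moreover have "k * ((d - k) + 1) \<ge> k + (d - k)"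
  proof -
    have "1 * (d - k) \<le> k * (d - k)" using \<open>k \<ge> 1\<close> by (rule mult_le_mono1)
    then show ?thesis by (simp add: algebra_simps)
  qed
  moreover have "d + 1 - k = (d - k) + 1" using False by simp
  ultimately show ?thesis by (metis le_trans)
qed

lemma cross_count:
  assumes sg: "simple_graph V E"
    and AV: "A \<subseteq> V" and Ane: "A \<noteq> {}"
    and nb: "\<forall>x\<in>A. \<exists>y\<in>V - A. adj E x y"
  shows "card {{x, y} | x y. x \<in> A \<and> y \<in> V - A \<and> adj E x y} \<ge> min_degree V E"
proof -
  have finV: "finite V" using sg unfolding simple_graph_def by simp
  have finA: "finite A" using AV finV finite_subset by blast
  define N where "N x = {y \<in> V - A. adj E x y}" for x
  have finN: "finite (N x)" for x using finV unfolding N_def by simp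
  have Ceq: "{{x, y} | x y. x \<in> A \<and> y \<in> V - A \<and> adj E x y} = (\<Union>x\<in>A. (\<lambda>y. {x, y}) ` N x)"
    unfolding N_def by blast
  have disj: "\<forall>x\<in>A. \<forall>x'\<in>A. x \<noteq> x' \<longrightarrow> (\<lambda>y. {x, y}) ` N x \<inter> (\<lambda>y. {x', y}) ` N x' = {}"
    unfolding N_def by (auto simp: doubleton_eq_iff)
  have injN: "inj_on (\<lambda>y. {x, y}) (N x)" for x
    unfolding inj_on_def by (auto simp: doubleton_eq_iff)
  have "card (\<Union>x\<in>A. (\<lambda>y. {x, y}) ` N x) = (\<Sum>x\<in>A. card ((\<lambda>y. {x, y}) ` N x))"
    by (rule card_UN_disjoint) (use finA finN disj in auto)
  also have "\<dots> = (\<Sum>x\<in>A. card (N x))"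
    using card_image[OF injN] by simp
  finally have cardC: "card (\<Union>x\<in>A. (\<lambda>y. {x, y}) ` N x) = (\<Sum>x\<in>A. card (N x))" .
  have bound: "card (N x) \<ge> 1 \<and> card (N x) + card A \<ge> min_degree V E + 1" if xA: "x \<in> A" for x
  proof
    show "card (N x) \<ge> 1" using nb xA finN[of x] unfolding N_def
      by (metis (mono_tags, lifting) One_nat_def Suc_leI card_gt_0_iff empty_iff mem_Collect_eq)
    have xV: "x \<in> V" using xA AV by auto
    have "min_degree V E \<le> degree V E x"
      unfolding min_degree_def using finV xV by simp
    also have "degree V E x \<le> card (N x) + card (A - {x})"
    proof -
      have "{u \<in> V. adj E x u} \<subseteq> N x \<union> (A - {x})"
        unfolding N_def adj_def by auto
      hence "degree V E x \<le> card (N x \<union> (A - {x}))"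
        unfolding degree_def by (rule card_mono[rotated]) (use finN finA in auto)
      also have "\<dots> \<le> card (N x) + card (A - {x})" by (rule card_Un_le)
      finally show ?thesis .
    qed
    also have "card (A - {x}) = card A - 1" using xA finA by simp
    finally have "min_degree V E \<le> card (N x) + (card A - 1)" .
    moreover have "card A \<ge> 1" using xA finA by (simp add: Suc_le_eq card_gt_0_iff) blast
    ultimately show "card (N x) + card A \<ge> min_degree V E + 1" by linarith
  qed
  have "(\<Sum>x\<in>A. card (N x)) \<ge> min_degree V E"
    by (rule arith_bound[OF finA refl]) (use Ane finA bound in \<open>auto simp: Suc_le_eq card_gt_0_iff\<close>)
  then show ?thesis using Ceq cardC by simp
qed

theorem lemma6:
  fixes V :: "'a set" and E :: "'a set set" and F :: "'a set set"
  assumes "simple_graph V E"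
    and "graph_connected V E"
    and "cograph V E"
    and "min_edge_separator V E F"
  shows "card F = min_degree V E"
proof -
  note sg = assms(1) and con = assms(2) and cg = assms(3)
  have finV: "finite V" using sg unfolding simple_graph_def by simp
  have EV: "E \<subseteq> Pow V" using sg unfolding simple_graph_def by auto
  have finE: "finite E" using finite_subset[OF EV] finV by simp
  have sep: "F \<subseteq> E" "\<not> graph_connected V (E - F)"
    and minF: "\<And>F'. edge_separator V E F' \<Longrightarrow> card F \<le> card F'"
    using assms(4) unfolding min_edge_separator_def edge_separator_def by auto
  have finF: "finite F" using sep(1) finE finite_subset by blast
  have Vne: "V \<noteq> {}" using con unfolding graph_connected_def by simp
  define R where "R = {(x, y). adj (E - F) x y}"
  obtain u v where uV: "u \<in> V" and vV: "v \<in> V" and uv: "(u, v) \<notin> R\<^sup>*"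
    using sep(2) Vne unfolding graph_connected_def R_def by blast
  have "u \<noteq> v" using uv by auto
  define S where "S = {z \<in> V. (u, z) \<in> R\<^sup>*}"
  have uS: "u \<in> S" using uV unfolding S_def by simp
  have vS: "v \<notin> S" using uv unfolding S_def by simp
  have SV: "S \<subseteq> V" unfolding S_def by auto
  define C where "C = {{x, y} | x y. x \<in> S \<and> y \<in> V - S \<and> adj E x y}"
  have CF: "C \<subseteq> F"
  proof
    fix e assume "e \<in> C"
    then obtain x y where e: "e = {x, y}" and xS: "x \<in> S" and yS: "y \<in> V - S" and xy: "adj E x y"
      unfolding C_def by blast
    show "e \<in> F"
    proof (rule ccontr)
      assume "e \<notin> F"
      hence "(x, y) \<in> R" using xy e unfolding R_def adj_def by auto
      hence "(u, y) \<in> R\<^sup>*" using xS unfolding S_def by auto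
      then show False using yS unfolding S_def by auto
    qed
  qed
  have C': "C = {{x, y} | x y. x \<in> V - S \<and> y \<in> V - (V - S) \<and> adj E x y}"
  proof -
    have VS: "V - (V - S) = S" using SV by auto
    have sw: "\<And>x y. adj E x y = adj E y x" by (rule adj_sym)
    have sw2: "\<And>x y::'a. {x, y} = {y, x}" by blast
    show ?thesis unfolding C_def VS
    proof (intro set_eqI iffI)
      fix e assume "e \<in> {{x, y} |x y. x \<in> S \<and> y \<in> V - S \<and> adj E x y}"
      then obtain x y where "e = {x, y}" "x \<in> S" "y \<in> V - S" "adj E x y" by blast
      then show "e \<in> {{x, y} |x y. x \<in> V - S \<and> y \<in> S \<and> adj E x y}"
        using sw[of x y] sw2[of x y] by blast
    next
      fix e assume "e \<in> {{x, y} |x y. x \<in> V - S \<and> y \<in> S \<and> adj E x y}"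
      then obtain x y where "e = {x, y}" "x \<in> V - S" "y \<in> S" "adj E x y" by blast
      then show "e \<in> {{x, y} |x y. x \<in> S \<and> y \<in> V - S \<and> adj E x y}"
        using sw[of x y] sw2[of x y] by blast
    qed
  qed
  have lowC: "card C \<ge> min_degree V E"
  proof (cases "\<forall>x\<in>S. \<exists>y\<in>V - S. adj E x y")
    case True
    then show ?thesis unfolding C_def using cross_count[OF sg SV] uS by blast
  next
    case False
    then obtain x where xS: "x \<in> S" and xn: "\<forall>y\<in>V - S. \<not> adj E x y" by blast
    have "\<forall>y\<in>V - S. \<exists>z\<in>V - (V - S). adj E y z"
    proof (rule ccontr)
      assume "\<not> ?thesis"
      then obtain y where yS: "y \<in> V - S" and yn: "\<forall>z\<in>V - (V - S). \<not> adj E y z" by blast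
      have "x \<noteq> y" using xS yS by auto
      moreover have "\<not> adj E x y" using xn yS by auto
      ultimately obtain c where xc: "adj E x c" and cy: "adj E c y"
        using common_nb[OF sg cg con] xS yS SV by blast
      have "c \<in> V" using adj_V[OF sg xc] by simp
      then show False
        using xn yn xc cy SV by (cases "c \<in> S") (auto simp: adj_sym)
    qed
    moreover have "V - S \<noteq> {}" using vV vS by auto
    ultimately show ?thesis unfolding C' using cross_count[OF sg, of "V - S"] by blast
  qed
  have "card C \<le> card F" using CF finF card_mono by blast
  hence low: "card F \<ge> min_degree V E" using lowC by simp
  obtain w where wV: "w \<in> V" and wd: "degree V E w = min_degree V E"
  proof -
    have "Min (degree V E ` V) \<in> degree V E ` V" using finV Vne by (intro Min_in) auto
    then show ?thesis using that unfolding min_degree_def by auto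
  qed
  define F' where "F' = {e \<in> E. w \<in> e}"
  obtain o' where oV: "o' \<in> V" and ow: "o' \<noteq> w" using uV vV \<open>u \<noteq> v\<close> by blast
  have "\<not> graph_connected V (E - F')"
  proof
    assume "graph_connected V (E - F')"
    hence "(w, o') \<in> {(x, y). adj (E - F') x y}\<^sup>*" using wV oV unfolding graph_connected_def by blast
    moreover have "\<forall>z. (w, z) \<notin> {(x, y). adj (E - F') x y}" unfolding F'_def adj_def by auto
    ultimately show False using ow by (metis converse_rtranclE)
  qed
  hence "edge_separator V E F'" unfolding edge_separator_def F'_def by auto
  hence "card F \<le> card F'" by (rule minF)
  also have "F' = (\<lambda>z. {w, z}) ` {z \<in> V. adj E w z}"
  proof
    show "F' \<subseteq> (\<lambda>z. {w, z}) ` {z \<in> V. adj E w z}"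
    proof
      fix e assume "e \<in> F'"
      hence eE: "e \<in> E" and we: "w \<in> e" unfolding F'_def by auto
      obtain a b where ab: "e = {a, b}" "a \<noteq> b" "a \<in> V" "b \<in> V"
        using sg eE unfolding simple_graph_def by meson
      have "\<exists>z. e = {w, z} \<and> z \<noteq> w \<and> z \<in> V"
      proof (cases "w = a")
        case True
        then show ?thesis using ab by blast
      next
        case False
        hence "w = b" using we ab by auto
        hence "e = {w, a}" using ab by blast
        then show ?thesis using ab \<open>w = b\<close> by blast
      qed
      then obtain z where z: "e = {w, z}" "z \<noteq> w" "z \<in> V" by blast
      have "adj E w z" unfolding adj_def using z eE by simp
      then show "e \<in> (\<lambda>z. {w, z}) ` {z \<in> V. adj E w z}" using z by blast
    qed
  next
    show "(\<lambda>z. {w, z}) ` {z \<in> V. adj E w z} \<subseteq> F'" unfolding F'_def adj_def by auto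
  qed
  also have "card \<dots> = degree V E w"
    unfolding degree_def by (rule card_image) (auto simp: inj_on_def doubleton_eq_iff)
  finally show ?thesis using wd low by simp
qed

end
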